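(* Let $f\in\mathcal C$ and assume that $A=\sum_{\ell\in\mathbb Z_*}|c_f(\ell)|\,d(\ell)$ is finite. Then $$\sum_{d=1}^\infty\frac1d\Big|\tilde D_f(d)-f(1)+\sum_{\ell\in\mathbb Z}c_f(\ell)\Big|\le A.$$
   Context: $D_f(d)=\sum_{k=1}^d f(k/d)$ and $\tilde D_f(d)=D_f(d)-d\int_0^1f(x)dx$. $d(\ell)$ is the number of positive divisors of $|\ell|$. $\mathcal C$ is the class of functions $g\colon[0,1]\to\mathbb R$ such that for every rational $x\in(0,1)$, $g(x-0)=g(x+0)$ and $\int_0^\delta\frac{|g(x+u)+g(x-u)-2g(x)|}{u}du<\infty$ for some $\delta>0$. Functions are regarded as $1$-periodic and tacitly Lebesgue integrable on $[0,1]$, with Fourier coefficients $c_g(\ell)=\int_0^1g(x)e^{-2\pi i\ell x}dx$. $\mathbb Z_*=\mathbb Z\setminus\{0\}$. *)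

theory Defs
  imports "HOL-Analysis.Analysis"
begin

definition D_sum :: "(real \<Rightarrow> real) \<Rightarrow> nat \<Rightarrow> real" where
  "D_sum f d = (\<Sum>k=1..d. f (real k / real d))"

definition D_tilde :: "(real \<Rightarrow> real) \<Rightarrow> nat \<Rightarrow> real" where
  "D_tilde f d = D_sum f d - real d * (LINT x:{0..1}|lborel. f x)"

definition num_divisors :: "int \<Rightarrow> nat" where
  "num_divisors l = card {m::int. 0 < m \<and> m dvd \<bar>l\<bar>}"

definition fourier_coeff :: "(real \<Rightarrow> real) \<Rightarrow> int \<Rightarrow> complex" where
  "fourier_coeff g l =
     (LINT x:{0..1}|lborel. complex_of_real (g x) * exp (- 2 * pi * \<i> * of_int l * of_real x))"

definition class_C :: "(real \<Rightarrow> real) \<Rightarrow> bool" where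
  "class_C g \<longleftrightarrow>
     (\<forall>x\<in>\<rat>. 0 < x \<and> x < 1 \<longrightarrow>
        (\<exists>L. (g \<longlongrightarrow> L) (at_left x) \<and> (g \<longlongrightarrow> L) (at_right x)) \<and>
        (\<exists>\<delta>>0. \<delta> \<le> min x (1 - x) \<and>
           set_integrable lborel {0<..<\<delta>}
             (\<lambda>u. \<bar>g (x + u) + g (x - u) - 2 * g x\<bar> / u)))"

end

theory Submission
  imports Defs
begin

definition Dk :: "nat \<Rightarrow> real \<Rightarrow> real" where
  "Dk n t = 1 + 2 * (\<Sum>l=1..n. cos (2 * pi * real l * t))"

lemma Dk_sin: "Dk n t * sin (pi * t) = sin ((2 * real n + 1) * pi * t)"
proof (induction n)
  case 0 then show ?case by (simp add: Dk_def)
next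
  case (Suc n)
  have "Dk (Suc n) t = Dk n t + 2 * cos (2 * pi * real (Suc n) * t)"
    by (simp add: Dk_def)
  then have "Dk (Suc n) t * sin (pi * t) = sin ((2 * real n + 1) * pi * t) + 2 * cos (2 * pi * real (Suc n) * t) * sin (pi * t)"
    using Suc by (simp add: algebra_simps)
  also have "2 * cos (2 * pi * real (Suc n) * t) * sin (pi * t) =
     sin (2 * pi * real (Suc n) * t + pi * t) - sin (2 * pi * real (Suc n) * t - pi * t)"
    by (simp add: sin_add sin_diff)
  also have "2 * pi * real (Suc n) * t - pi * t = (2 * real n + 1) * pi * t" by (simp add: algebra_simps)
  also have "2 * pi * real (Suc n) * t + pi * t = (2 * real (Suc n) + 1) * pi * t" by (simp add: algebra_simps)
  finally show ?case by simp
qed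

lemma sin_sq_diff: "sin (a::real) ^ 2 - sin b ^ 2 = sin (a + b) * sin (a - b)"
proof -
  have "sin (a + b) * sin (a - b) = sin a ^ 2 * cos b ^ 2 - cos a ^ 2 * sin b ^ 2"
    unfolding sin_add sin_diff by (simp add: power2_eq_square algebra_simps)
  also have "\<dots> = sin a ^ 2 * (1 - sin b ^ 2) - (1 - sin a ^ 2) * sin b ^ 2"
    by (simp add: cos_squared_eq)
  finally show ?thesis by (simp add: algebra_simps)
qed

lemma Dk_sum_sin: "(\<Sum>n\<le>N. Dk n t) * sin (pi * t) ^ 2 = sin (real (Suc N) * pi * t) ^ 2"
proof (induction N)
  case 0 then show ?case by (simp add: Dk_def)
next
  case (Suc N)
  have "(\<Sum>n\<le>Suc N. Dk n t) * sin (pi * t) ^ 2 = sin (real (Suc N) * pi * t) ^ 2 + (Dk (Suc N) t * sin (pi * t)) * sin (pi * t)"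
    using Suc by (simp add: algebra_simps power2_eq_square)
  also have "\<dots> = sin (real (Suc N) * pi * t) ^ 2 + sin ((2 * real (Suc N) + 1) * pi * t) * sin (pi * t)"
    by (simp only: Dk_sin)
  also have "sin ((2 * real (Suc N) + 1) * pi * t) * sin (pi * t) = sin (real (Suc (Suc N)) * pi * t) ^ 2 - sin (real (Suc N) * pi * t) ^ 2"
    by (subst sin_sq_diff) (simp add: algebra_simps)
  finally show ?case by simp
qed

lemma Dk_int: "t \<in> \<int> \<Longrightarrow> Dk n t = 2 * real n + 1"
proof -
  assume "t \<in> \<int>"
  then obtain i where i: "t = of_int i" by (auto elim: Ints_cases)
  have "cos (2 * pi * real l * t) = 1" for l
  proof -
    have "2 * pi * real l * t = 2 * pi * of_int (int l * i)" by (simp add: i)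
    then show ?thesis by (simp only: cos_int_2pin) 
  qed
  then show ?thesis by (simp add: Dk_def)
qed

definition Fk :: "nat \<Rightarrow> real \<Rightarrow> real" where
  "Fk N t = (\<Sum>n\<le>N. Dk n t) / real (Suc N)"

lemma Fk_nonneg: "Fk N t \<ge> 0"
proof (cases "sin (pi * t) = 0")
  case True
  then obtain i :: int where "pi * t = of_int i * pi" using sin_zero_iff_int2 by blast
  then have "t \<in> \<int>" by (metis Ints_of_int mult.commute mult_cancel_left pi_neq_zero)
  then show ?thesis by (simp add: Fk_def Dk_int sum_nonneg)
next
  case False
  then have "(\<Sum>n\<le>N. Dk n t) = sin (real (Suc N) * pi * t) ^ 2 / sin (pi * t) ^ 2"
    using Dk_sum_sin[of t N] by (simp add: field_simps)
  then show ?thesis by (simp add: Fk_def)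
qed

lemma Fk_bound: "sin (pi * t) \<noteq> 0 \<Longrightarrow> Fk N t \<le> 1 / (real (Suc N) * sin (pi * t) ^ 2)"
proof -
  assume ne: "sin (pi * t) \<noteq> 0"
  then have "(\<Sum>n\<le>N. Dk n t) = sin (real (Suc N) * pi * t) ^ 2 / sin (pi * t) ^ 2"
    using Dk_sum_sin[of t N] by (simp add: field_simps)
  moreover have "sin (real (Suc N) * pi * t) ^ 2 \<le> 1" by (simp add: abs_square_le_1)
  ultimately have "(\<Sum>n\<le>N. Dk n t) \<le> 1 / sin (pi * t) ^ 2"
    using ne by (simp add: divide_right_mono)
  then have "(\<Sum>n\<le>N. Dk n t) / real (Suc N) \<le> (1 / sin (pi * t) ^ 2) / real (Suc N)"
    by (rule divide_right_mono) auto
  moreover have "(1 / sin (pi * t) ^ 2) / real (Suc N) = 1 / (real (Suc N) * sin (pi * t) ^ 2)"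
    by (simp add: divide_divide_eq_left mult.commute)
  ultimately show ?thesis by (simp only: Fk_def)
qed


lemma set_integral_sum_fin:
  fixes g :: "'i \<Rightarrow> 'a \<Rightarrow> 'b::{banach, second_countable_topology}"
  assumes "\<And>i. i \<in> I \<Longrightarrow> set_integrable M A (g i)"
  shows "(LINT x:A|M. (\<Sum>i\<in>I. g i x)) = (\<Sum>i\<in>I. LINT x:A|M. g i x)"
  using assms unfolding set_lebesgue_integral_def set_integrable_def
  by (simp add: scaleR_sum_right integral_sum)

lemma set_integrable_sum_fin:
  fixes g :: "'i \<Rightarrow> 'a \<Rightarrow> 'b::{banach, second_countable_topology}"
  assumes "\<And>i. i \<in> I \<Longrightarrow> set_integrable M A (g i)"
  shows "set_integrable M A (\<lambda>x. \<Sum>i\<in>I. g i x)"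
  using assms unfolding set_integrable_def
  by (simp add: scaleR_sum_right)

lemma set_integrable_mult_cont:
  fixes g :: "real \<Rightarrow> 'a::{real_normed_field, second_countable_topology, banach}"
  assumes f: "set_integrable lborel {a..b} f" and g: "continuous_on {a..b} g"
  shows "set_integrable lborel {a..b} (\<lambda>y. of_real (f y) * g y)"
proof -
  obtain B where B: "\<And>y. y \<in> {a..b} \<Longrightarrow> norm (g y) \<le> B"
    using continuous_on_compact_bound[OF compact_Icc g] by blast
  have fi: "set_integrable lborel {a..b} (\<lambda>y. B * f y)" using f by simp
  have m1: "(\<lambda>x. indicator {a..b} x *\<^sub>R f x) \<in> borel_measurable lborel"
    using f unfolding set_integrable_def by (rule borel_measurable_integrable)
  have m2: "(\<lambda>x. indicator {a..b} x *\<^sub>R g x) \<in> borel_measurable lborel"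
    using set_measurable_continuous_on[OF _ g] unfolding set_borel_measurable_def by simp
  have m1': "(\<lambda>x. of_real (indicator {a..b} x *\<^sub>R f x) :: 'a) \<in> borel_measurable lborel"
    using m1 by measurable
  have "(\<lambda>x. of_real (indicator {a..b} x *\<^sub>R f x) * (indicator {a..b} x *\<^sub>R g x)) \<in> borel_measurable lborel"
    using m1' m2 by (rule borel_measurable_times)
  moreover have "(\<lambda>x. of_real (indicator {a..b} x *\<^sub>R f x) * (indicator {a..b} x *\<^sub>R g x))
     = (\<lambda>x. indicator {a..b} x *\<^sub>R (of_real (f x) * g x))"
    by (auto simp: indicator_def fun_eq_iff)
  ultimately have "set_borel_measurable lborel {a..b} (\<lambda>y. of_real (f y) * g y)"
    unfolding set_borel_measurable_def by simp
  then show ?thesis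
  proof (rule set_integrable_bound[OF fi])
    show "AE x in lborel. x \<in> {a..b} \<longrightarrow> norm (of_real (f x) * g x) \<le> norm (B * f x)"
    proof (intro AE_I2 impI)
      fix x assume x: "x \<in> {a..b}"
      have "norm (of_real (f x) * g x) = \<bar>f x\<bar> * norm (g x)" by (simp add: norm_mult)
      also have "\<dots> \<le> \<bar>f x\<bar> * \<bar>B\<bar>" using B[OF x] by (intro mult_left_mono) auto
      also have "\<dots> = norm (B * f x)" by (simp add: abs_mult)
      finally show "norm (of_real (f x) * g x) \<le> norm (B * f x)" .
    qed
  qed
qed

lemma set_integrable_mult_cont_real:
  fixes f g :: "real \<Rightarrow> real"
  assumes f: "set_integrable lborel {a..b} f" and g: "continuous_on {a..b} g"
  shows "set_integrable lborel {a..b} (\<lambda>y. f y * g y :: real)"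
  using set_integrable_mult_cont[where 'a=real, OF f g] by simp

lemma exp_sum_Dk: "(\<Sum>l\<in>{-int n..int n}. exp (2 * pi * \<i> * of_int l * of_real t)) = complex_of_real (Dk n t)"
proof (induction n)
  case 0 then show ?case by (simp add: Dk_def)
next
  case (Suc n)
  have eq: "{-int (Suc n)..int (Suc n)} = insert (-int (Suc n)) (insert (int (Suc n)) {-int n..int n})"
    by auto
  have "(\<Sum>l\<in>{-int (Suc n)..int (Suc n)}. exp (2 * pi * \<i> * of_int l * of_real t))
     = exp (2 * pi * \<i> * of_int (- int (Suc n)) * of_real t) + exp (2 * pi * \<i> * of_int (int (Suc n)) * of_real t)
       + (\<Sum>l\<in>{-int n..int n}. exp (2 * pi * \<i> * of_int l * of_real t))"
    unfolding eq by (subst sum.insert; simp)+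
  also have "exp (2 * pi * \<i> * of_int (- int (Suc n)) * of_real t) + exp (2 * pi * \<i> * of_int (int (Suc n)) * of_real t)
     = 2 * cos (complex_of_real (2 * pi * real (Suc n) * t))"
    by (simp add: cos_exp_eq algebra_simps)
  also have "\<dots> = complex_of_real (2 * cos (2 * pi * real (Suc n) * t))"
    using cos_of_real[of "2 * pi * real (Suc n) * t"] by simp
  finally show ?case using Suc by (simp add: Dk_def)
qed

lemma exp_cont: "continuous_on A (\<lambda>y::real. exp (c * complex_of_real y))"
  by (intro continuous_intros)

lemma fourier_term:
  assumes f: "set_integrable lborel {0..1} f"
  shows "fourier_coeff f l * exp (2 * pi * \<i> * of_int l * of_real x)
     = (LINT y:{0..1}|lborel. complex_of_real (f y) * exp (2 * pi * \<i> * of_int l * of_real (x - y)))"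
proof -
  have "fourier_coeff f l * exp (2 * pi * \<i> * of_int l * of_real x)
     = (LINT y:{0..1}|lborel. complex_of_real (f y) * exp (- 2 * pi * \<i> * of_int l * of_real y) * exp (2 * pi * \<i> * of_int l * of_real x))"
    unfolding fourier_coeff_def by simp
  also have "\<dots> = (LINT y:{0..1}|lborel. complex_of_real (f y) * exp (2 * pi * \<i> * of_int l * of_real (x - y)))"
  proof -
    have pw: "complex_of_real (f y) * exp (- 2 * pi * \<i> * of_int l * of_real y) * exp (2 * pi * \<i> * of_int l * of_real x)
       = complex_of_real (f y) * exp (2 * pi * \<i> * of_int l * of_real (x - y))" for y
    proof -
      have "exp (- 2 * pi * \<i> * of_int l * of_real y) * exp (2 * pi * \<i> * of_int l * of_real x)
          = exp (- 2 * pi * \<i> * of_int l * of_real y + 2 * pi * \<i> * of_int l * of_real x)"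
        by (rule exp_add[symmetric])
      also have "- 2 * pi * \<i> * of_int l * of_real y + 2 * pi * \<i> * of_int l * of_real x = 2 * pi * \<i> * of_int l * of_real (x - y)"
        by (simp add: algebra_simps)
      finally show ?thesis by (simp add: mult.assoc)
    qed
    show ?thesis by (intro set_lebesgue_integral_cong) (auto simp only: pw, simp)
  qed
  finally show ?thesis .
qed

lemma partial_sum_Dk:
  assumes f: "set_integrable lborel {0..1} f"
  shows "(\<Sum>l\<in>{-int n..int n}. fourier_coeff f l * exp (2 * pi * \<i> * of_int l * of_real x))
     = complex_of_real (LINT y:{0..1}|lborel. f y * Dk n (x - y))"
proof -
  have int: "set_integrable lborel {0..1} (\<lambda>y. complex_of_real (f y) * exp (2 * pi * \<i> * of_int l * of_real (x - y)))" for l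
    by (rule set_integrable_mult_cont[OF f]) (intro continuous_intros)
  have "(\<Sum>l\<in>{-int n..int n}. fourier_coeff f l * exp (2 * pi * \<i> * of_int l * of_real x))
      = (\<Sum>l\<in>{-int n..int n}. LINT y:{0..1}|lborel. complex_of_real (f y) * exp (2 * pi * \<i> * of_int l * of_real (x - y)))"
    using fourier_term[OF f] by simp
  also have "\<dots> = (LINT y:{0..1}|lborel. (\<Sum>l\<in>{-int n..int n}. complex_of_real (f y) * exp (2 * pi * \<i> * of_int l * of_real (x - y))))"
    by (rule set_integral_sum_fin[symmetric]) (rule int)
  also have "\<dots> = (LINT y:{0..1}|lborel. complex_of_real (f y * Dk n (x - y)))"
  proof -
    have pw: "(\<Sum>l\<in>{-int n..int n}. complex_of_real (f y) * exp (2 * pi * \<i> * of_int l * of_real (x - y)))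
      = complex_of_real (f y * Dk n (x - y))" for y
    proof -
      have "(\<Sum>l\<in>{-int n..int n}. complex_of_real (f y) * exp (2 * pi * \<i> * of_int l * of_real (x - y)))
        = complex_of_real (f y) * (\<Sum>l\<in>{-int n..int n}. exp (2 * pi * \<i> * of_int l * of_real (x - y)))"
        by (rule sum_distrib_left[symmetric])
      also have "\<dots> = complex_of_real (f y) * complex_of_real (Dk n (x - y))"
        by (simp only: exp_sum_Dk)
      finally show ?thesis by simp
    qed
    show ?thesis by (intro set_lebesgue_integral_cong) (auto simp only: pw, simp)
  qed
  also have "\<dots> = complex_of_real (LINT y:{0..1}|lborel. f y * Dk n (x - y))"
    by (rule set_integral_complex_of_real)
  finally show ?thesis .
qed


lemma cos_integral_zero:
  assumes "l \<ge> 1"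
  shows "(LINT y:{0..1}|lborel. cos (2 * pi * real l * (x - y))) = 0"
proof -
  define F where "F y = - sin (2 * pi * real l * (x - y)) / (2 * pi * real l)" for y
  have lpos: "2 * pi * real l \<noteq> 0" using assms by simp
  have der: "(F has_vector_derivative cos (2 * pi * real l * (x - y))) (at y within {0..1})" for y
  proof -
    have "(F has_real_derivative (- (cos (2 * pi * real l * (x - y)) * (2 * pi * real l * (0 - 1)))) / (2 * pi * real l)) (at y within {0..1})"
      unfolding F_def using assms by (intro derivative_eq_intros) auto
    moreover have "(- (cos (2 * pi * real l * (x - y)) * (2 * pi * real l * (0 - 1)))) / (2 * pi * real l) = cos (2 * pi * real l * (x - y))"
      using lpos assms by (simp add: field_simps)
    ultimately show ?thesis by (simp add: has_real_derivative_iff_has_vector_derivative)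
  qed
  have "(LINT y:{0..1}|lborel. cos (2 * pi * real l * (x - y))) = F 1 - F 0"
    unfolding set_lebesgue_integral_def
  proof (rule integral_FTC_atLeastAtMost)
    show "continuous_on {0..1} (\<lambda>y. cos (2 * pi * real l * (x - y)))"
      by (intro continuous_intros)
  qed (auto intro: der)
  also have "F 1 = F 0"
  proof -
    have "sin (2 * pi * real l * (x - 1)) = sin (2 * pi * real l * x - 2 * pi * real l)"
      by (simp add: algebra_simps)
    also have "\<dots> = sin (2 * pi * real l * x)"
      by (simp add: sin_diff sin_integer_2pi cos_integer_2pi)
    finally show ?thesis by (simp add: F_def)
  qed
  finally show ?thesis by simp
qed

lemma Dk_integral: "(LINT y:{0..1}|lborel. Dk n (x - y)) = 1"
proof -
  have ci: "set_integrable lborel {0..1} (\<lambda>y. cos (2 * pi * real l * (x - y)))" for l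
    by (rule borel_integrable_atLeastAtMost') (intro continuous_intros)
  have c1: "set_integrable lborel {0..1} (\<lambda>y::real. 1::real)"
    by (rule borel_integrable_atLeastAtMost') (intro continuous_intros)
  have "(LINT y:{0..1}|lborel. Dk n (x - y))
      = (LINT y:{0..1}|lborel. 1 + 2 * (\<Sum>l=1..n. cos (2 * pi * real l * (x - y))))"
    by (simp add: Dk_def)
  also have "\<dots> = (LINT y:{0..1::real}|lborel. (1::real)) + (LINT y:{0..1}|lborel. 2 * (\<Sum>l=1..n. cos (2 * pi * real l * (x - y))))"
    by (rule set_integral_add(2)) (auto intro!: set_integrable_sum_fin ci c1)
  also have "(LINT y:{0..1}|lborel. 2 * (\<Sum>l=1..n. cos (2 * pi * real l * (x - y)))) = 2 * (\<Sum>l=1..n. LINT y:{0..1}|lborel. cos (2 * pi * real l * (x - y)))"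
    by (simp add: set_integral_sum_fin[OF ci])
  also have "(LINT y:{0..1::real}|lborel. (1::real)) = 1" by (subst set_integral_const) auto
  also have "(\<Sum>l=1..n. LINT y:{0..1}|lborel. cos (2 * pi * real l * (x - y))) = 0"
    by (simp add: cos_integral_zero)
  finally show ?thesis by simp
qed

lemma Dk_cont: "continuous_on A (\<lambda>y. Dk n (x - y))"
  unfolding Dk_def by (intro continuous_intros)

lemma Fk_cont: "continuous_on A (\<lambda>y. Fk N (x - y))"
  unfolding Fk_def by (intro continuous_intros Dk_cont) auto

lemma Fk_integral: "(LINT y:{0..1}|lborel. Fk N (x - y)) = 1"
proof -
  have di: "set_integrable lborel {0..1} (\<lambda>y. Dk n (x - y))" for n
    by (rule borel_integrable_atLeastAtMost') (rule Dk_cont)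
  have "(LINT y:{0..1}|lborel. Fk N (x - y)) = (LINT y:{0..1}|lborel. (\<Sum>n\<le>N. Dk n (x - y))) / real (Suc N)"
    by (simp add: Fk_def)
  also have "\<dots> = 1"
    by (simp add: set_integral_sum_fin[OF di] Dk_integral)
  finally show ?thesis .
qed

lemma cesaro_Fk:
  assumes f: "set_integrable lborel {0..1} f"
  shows "(\<Sum>n\<le>N. (\<Sum>l\<in>{-int n..int n}. fourier_coeff f l * exp (2 * pi * \<i> * of_int l * of_real x))) / of_nat (Suc N)
     = complex_of_real (LINT y:{0..1}|lborel. f y * Fk N (x - y))"
proof -
  have di: "set_integrable lborel {0..1} (\<lambda>y. f y * Dk n (x - y))" for n
    by (rule set_integrable_mult_cont_real[OF f Dk_cont])
  have "(\<Sum>n\<le>N. (\<Sum>l\<in>{-int n..int n}. fourier_coeff f l * exp (2 * pi * \<i> * of_int l * of_real x))) / of_nat (Suc N)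
     = complex_of_real ((\<Sum>n\<le>N. LINT y:{0..1}|lborel. f y * Dk n (x - y)) / real (Suc N))"
    unfolding partial_sum_Dk[OF f] by simp
  also have "(\<Sum>n\<le>N. LINT y:{0..1}|lborel. f y * Dk n (x - y)) = (LINT y:{0..1}|lborel. (\<Sum>n\<le>N. f y * Dk n (x - y)))"
    by (rule set_integral_sum_fin[symmetric]) (rule di)
  also have "\<dots> / real (Suc N) = (LINT y:{0..1}|lborel. f y * Fk N (x - y))"
    by (simp add: Fk_def sum_distrib_left[symmetric])
  finally show ?thesis .
qed


lemma sin_sq_lower:
  assumes d: "0 < d" "d \<le> 1/2" and t: "d \<le> \<bar>t\<bar>" "\<bar>t\<bar> \<le> 1 - d"
  shows "sin (pi * d) ^ 2 \<le> sin (pi * t) ^ 2"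
proof -
  define s where "s = \<bar>t\<bar>"
  have st: "sin (pi * t) ^ 2 = sin (pi * s) ^ 2"
    by (cases "t \<ge> 0") (auto simp: s_def)
  have pd: "- (pi / 2) \<le> pi * d"
  proof -
    have "0 < pi * d" using d by simp
    then show ?thesis using pi_gt_zero by linarith
  qed
  have sd0: "0 \<le> sin (pi * d)"
    using d by (intro sin_ge_zero) auto
  have "sin (pi * d) \<le> sin (pi * s)"
  proof (cases "s \<le> 1/2")
    case True
    then show ?thesis using d t pd unfolding s_def
      by (intro sin_monotone_2pi_le) (auto simp: mult_left_mono)
  next
    case False
    have "sin (pi * s) = sin (pi - pi * s)" by simp
    also have "pi - pi * s = pi * (1 - s)" by (simp add: algebra_simps)
    finally have e: "sin (pi * s) = sin (pi * (1 - s))" .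
    have "sin (pi * d) \<le> sin (pi * (1 - s))"
      using d t False pd unfolding s_def
      by (intro sin_monotone_2pi_le) (auto simp: mult_left_mono)
    then show ?thesis using e by simp
  qed
  then have "sin (pi * d) ^ 2 \<le> sin (pi * s) ^ 2"
    using sd0 by (intro power_mono) auto
  then show ?thesis using st by simp
qed

lemma fejer:
  fixes f :: "real \<Rightarrow> real"
  assumes f: "set_integrable lborel {0..1} f" and x: "0 < x" "x < 1" and c: "isCont f x"
  shows "(\<lambda>N. LINT y:{0..1}|lborel. f y * Fk N (x - y)) \<longlonglongrightarrow> f x"
proof (rule LIMSEQ_I)
  fix e :: real assume e: "0 < e"
  obtain \<eta> where \<eta>: "\<eta> > 0" and \<eta>c: "\<And>y. dist y x < \<eta> \<Longrightarrow> dist (f y) (f x) < e / 2"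
    using c e unfolding continuous_at_eps_delta by (metis half_gt_zero)
  define d where "d = min \<eta> (min x (1 - x))"
  have d0: "0 < d" "d \<le> 1/2" using \<eta> x by (auto simp: d_def min_def)
  define m where "m = sin (pi * d) ^ 2"
  have m0: "0 < m"
  proof -
    have "0 < sin (pi * d)" using d0 by (intro sin_gt_zero) auto
    then show ?thesis by (simp add: m_def)
  qed
  have fa: "set_integrable lborel {0..1} (\<lambda>y. \<bar>f y - f x\<bar>)"
    by (intro set_integrable_abs set_integral_diff(1) f borel_integrable_atLeastAtMost' continuous_intros)
  define K where "K = (LINT y:{0..1}|lborel. \<bar>f y - f x\<bar>)"
  obtain M :: nat where M: "2 * K / (e * m) < real M"
    using reals_Archimedean2 by blast
  show "\<exists>no. \<forall>N\<ge>no. norm ((LINT y:{0..1}|lborel. f y * Fk N (x - y)) - f x) < e"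
  proof (intro exI allI impI)
    fix N assume N: "N \<ge> M"
    have Fi: "set_integrable lborel {0..1} (\<lambda>y. Fk N (x - y))"
      by (rule borel_integrable_atLeastAtMost') (rule Fk_cont)
    have fFi: "set_integrable lborel {0..1} (\<lambda>y. f y * Fk N (x - y))"
      by (rule set_integrable_mult_cont_real[OF f Fk_cont])
    have cFi: "set_integrable lborel {0..1} (\<lambda>y. f x * Fk N (x - y))"
      using Fi by simp
    have aFi: "set_integrable lborel {0..1} (\<lambda>y. \<bar>f y - f x\<bar> * Fk N (x - y))"
      by (rule set_integrable_mult_cont_real[OF fa Fk_cont])
    have dFi: "set_integrable lborel {0..1} (\<lambda>y. (f y - f x) * Fk N (x - y))"
      using set_integral_diff(1)[OF fFi cFi] by (simp add: algebra_simps)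
    have "(LINT y:{0..1}|lborel. f y * Fk N (x - y)) - f x
        = (LINT y:{0..1}|lborel. f y * Fk N (x - y)) - (LINT y:{0..1}|lborel. f x * Fk N (x - y))"
      by (simp add: Fk_integral)
    also have "\<dots> = (LINT y:{0..1}|lborel. (f y - f x) * Fk N (x - y))"
      using set_integral_diff(2)[OF fFi cFi] by (simp add: algebra_simps)
    finally have eq: "(LINT y:{0..1}|lborel. f y * Fk N (x - y)) - f x = (LINT y:{0..1}|lborel. (f y - f x) * Fk N (x - y))" .
    have le1: "\<bar>LINT y:{0..1}|lborel. (f y - f x) * Fk N (x - y)\<bar> \<le> (LINT y:{0..1}|lborel. \<bar>f y - f x\<bar> * Fk N (x - y))"
    proof -
      have "\<bar>LINT y:{0..1}|lborel. (f y - f x) * Fk N (x - y)\<bar> \<le> (LINT y:{0..1}|lborel. norm ((f y - f x) * Fk N (x - y)))"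
        using set_integral_norm_bound[OF dFi] by simp
      also have "\<dots> = (LINT y:{0..1}|lborel. \<bar>f y - f x\<bar> * Fk N (x - y))"
        by (intro set_lebesgue_integral_cong) (auto simp: abs_mult Fk_nonneg)
      finally show ?thesis .
    qed
    define C where "C = real (Suc N) * m"
    have C0: "0 < C" using m0 by (simp add: C_def)
    have pw: "\<bar>f y - f x\<bar> * Fk N (x - y) \<le> e / 2 * Fk N (x - y) + \<bar>f y - f x\<bar> / C"
      if y: "y \<in> {0..1}" for y
    proof (cases "\<bar>x - y\<bar> < \<eta>")
      case True
      then have "\<bar>f y - f x\<bar> < e / 2" using \<eta>c[of y] by (simp add: dist_real_def abs_minus_commute)
      then have "\<bar>f y - f x\<bar> * Fk N (x - y) \<le> e / 2 * Fk N (x - y)"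
        by (intro mult_right_mono) (auto simp: Fk_nonneg)
      moreover have "0 \<le> \<bar>f y - f x\<bar> / C" using C0 by simp
      ultimately show ?thesis by linarith
    next
      case False
      have "m \<le> sin (pi * (x - y)) ^ 2"
        unfolding m_def using False y d0 x by (intro sin_sq_lower) (auto simp: d_def)
      then have sne: "sin (pi * (x - y)) \<noteq> 0" using m0 by auto
      have "Fk N (x - y) \<le> 1 / (real (Suc N) * sin (pi * (x - y)) ^ 2)"
        by (rule Fk_bound[OF sne])
      also have "\<dots> \<le> 1 / C"
        unfolding C_def using m0 \<open>m \<le> _\<close> by (intro divide_left_mono mult_left_mono mult_pos_pos) auto
      finally have "\<bar>f y - f x\<bar> * Fk N (x - y) \<le> \<bar>f y - f x\<bar> * (1 / C)"
        by (intro mult_left_mono) auto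
      moreover have "0 \<le> e / 2 * Fk N (x - y)" using e by (simp add: Fk_nonneg)
      ultimately show ?thesis by simp
    qed
    have "(LINT y:{0..1}|lborel. \<bar>f y - f x\<bar> * Fk N (x - y))
        \<le> (LINT y:{0..1}|lborel. e / 2 * Fk N (x - y) + \<bar>f y - f x\<bar> / C)"
    proof (rule set_integral_mono[OF aFi])
      show "set_integrable lborel {0..1} (\<lambda>y. e / 2 * Fk N (x - y) + \<bar>f y - f x\<bar> / C)"
        using Fi fa by (intro set_integral_add(1)) auto
    qed (rule pw)
    also have "\<dots> = e / 2 * (LINT y:{0..1}|lborel. Fk N (x - y)) + K / C"
      using Fi fa by (subst set_integral_add(2)) (auto simp: K_def)
    also have "\<dots> = e / 2 + K / C" by (simp add: Fk_integral)
    finally have le2: "(LINT y:{0..1}|lborel. \<bar>f y - f x\<bar> * Fk N (x - y)) \<le> e / 2 + K / C" .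
    have K0: "0 \<le> K" unfolding K_def set_lebesgue_integral_def
      by (intro Bochner_Integration.integral_nonneg) (simp add: indicator_def)
    have "K / C < e / 2"
    proof -
      have "2 * K < real M * (e * m)" using M e m0 by (simp add: field_simps)
      also have "\<dots> \<le> real (Suc N) * (e * m)" using N e m0 by (intro mult_right_mono) auto
      finally have "2 * K < e * C" by (simp add: C_def algebra_simps)
      then show ?thesis using C0 by (simp add: field_simps)
    qed
    then show "norm ((LINT y:{0..1}|lborel. f y * Fk N (x - y)) - f x) < e"
      using eq le1 le2 \<open>K / C < e / 2\<close> by (simp only: real_norm_def)
  qed
qed


lemma cesaro:
  fixes a :: "nat \<Rightarrow> complex"
  assumes a: "a \<longlonglongrightarrow> L"
  shows "(\<lambda>N. (\<Sum>n\<le>N. a n) / of_nat (Suc N)) \<longlonglongrightarrow> L"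
proof (rule LIMSEQ_I)
  fix e :: real assume e: "0 < e"
  obtain M where M: "\<And>n. n \<ge> M \<Longrightarrow> norm (a n - L) < e / 2"
    using LIMSEQ_D[OF a, of "e/2"] e by auto
  define B where "B = (\<Sum>n<M. norm (a n - L))"
  have B0: "0 \<le> B" unfolding B_def by (simp add: sum_nonneg)
  obtain M2 :: nat where M2: "2 * B / e < real M2" using reals_Archimedean2 by blast
  show "\<exists>no. \<forall>N\<ge>no. norm ((\<Sum>n\<le>N. a n) / of_nat (Suc N) - L) < e"
  proof (intro exI allI impI)
    fix N assume N: "N \<ge> max M M2"
    have "(\<Sum>n\<le>N. a n) / of_nat (Suc N) - L = (\<Sum>n\<le>N. a n - L) / of_nat (Suc N)"
    proof -
      have nz: "(of_nat (Suc N) :: complex) \<noteq> 0" by (simp only: of_nat_eq_0_iff)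
      have "(\<Sum>n\<le>N. a n - L) = (\<Sum>n\<le>N. a n) - of_nat (Suc N) * L"
        by (simp add: sum_subtractf)
      then show ?thesis using nz by (simp add: diff_divide_distrib)
    qed
    also have "(\<Sum>n\<le>N. a n - L) = (\<Sum>n<M. a n - L) + (\<Sum>n\<in>{M..N}. a n - L)"
    proof -
      have "{..N} = {..<M} \<union> {M..N}" using N by auto
      then show ?thesis by (simp only:) (rule sum.union_disjoint, auto)
    qed
    finally have eq: "(\<Sum>n\<le>N. a n) / of_nat (Suc N) - L = ((\<Sum>n<M. a n - L) + (\<Sum>n\<in>{M..N}. a n - L)) / of_nat (Suc N)" .
    have "norm ((\<Sum>n<M. a n - L) + (\<Sum>n\<in>{M..N}. a n - L)) \<le> B + (\<Sum>n\<in>{M..N}. e / 2)"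
    proof -
      have "norm (\<Sum>n<M. a n - L) \<le> B" unfolding B_def by (rule norm_sum)
      moreover have "norm (\<Sum>n\<in>{M..N}. a n - L) \<le> (\<Sum>n\<in>{M..N}. e / 2)"
        by (rule order_trans[OF norm_sum], rule sum_mono, rule less_imp_le, rule M) auto
      ultimately show ?thesis by (meson add_mono norm_triangle_le)
    qed
    also have "B + (\<Sum>n\<in>{M..N}. e / 2) \<le> B + real (Suc N) * (e / 2)"
      using e by simp
    finally have le: "norm ((\<Sum>n<M. a n - L) + (\<Sum>n\<in>{M..N}. a n - L)) \<le> B + real (Suc N) * (e / 2)" .
    have "norm ((\<Sum>n\<le>N. a n) / of_nat (Suc N) - L) = norm ((\<Sum>n<M. a n - L) + (\<Sum>n\<in>{M..N}. a n - L)) / real (Suc N)"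
      unfolding eq norm_divide norm_of_nat by simp
    also have "\<dots> \<le> (B + real (Suc N) * (e / 2)) / real (Suc N)"
      using le by (intro divide_right_mono) auto
    also have "\<dots> = B / real (Suc N) + e / 2" by (simp add: field_simps)
    also have "B / real (Suc N) < e / 2"
    proof -
      have "2 * B < real M2 * e" using M2 e by (simp add: field_simps)
      also have "\<dots> \<le> real (Suc N) * e" using N e by (intro mult_right_mono) auto
      finally show ?thesis by (simp add: field_simps)
    qed
    finally show "norm ((\<Sum>n\<le>N. a n) / of_nat (Suc N) - L) < e" by simp
  qed
qed

lemma has_sum_symmetric_limit:
  fixes g :: "int \<Rightarrow> 'a::topological_comm_monoid_add"
  assumes "(g has_sum S) UNIV"
  shows "(\<lambda>n. \<Sum>l\<in>{-int n..int n}. g l) \<longlonglongrightarrow> S"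
proof -
  have "filterlim (\<lambda>n::nat. {-int n..int n}) (finite_subsets_at_top UNIV) sequentially"
  proof (subst filterlim_finite_subsets_at_top, intro allI impI)
    fix X :: "int set" assume X: "finite X \<and> X \<subseteq> UNIV"
    define b where "b = Max (insert 0 (abs ` X))"
    have b: "\<bar>x\<bar> \<le> b" if "x \<in> X" for x
      unfolding b_def using X that by (intro Max_ge) auto
    show "eventually (\<lambda>n. finite {-int n..int n} \<and> X \<subseteq> {-int n..int n} \<and> {-int n..int n} \<subseteq> UNIV) sequentially"
    proof (rule eventually_sequentiallyI[of "nat b"])
      fix n assume n: "nat b \<le> n"
      have "X \<subseteq> {-int n..int n}"
      proof
        fix x assume "x \<in> X"
        then have "\<bar>x\<bar> \<le> b" by (rule b)
        then show "x \<in> {-int n..int n}" using n by auto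
      qed
      then show "finite {-int n..int n} \<and> X \<subseteq> {-int n..int n} \<and> {-int n..int n} \<subseteq> UNIV" by auto
    qed
  qed
  from filterlim_compose[OF assms[unfolded has_sum_def] this] show ?thesis by simp
qed


lemma inv_not_integrable:
  assumes a: "0 < a" and c: "0 < c"
  shows "\<not> set_integrable lborel {0<..<a} (\<lambda>u::real. c / u)"
proof
  assume I: "set_integrable lborel {0<..<a} (\<lambda>u::real. c / u)"
  define J where "J = (LINT u:{0<..<a}|lborel. c / u)"
  define b where "b = a / 2"
  have b: "0 < b" "b < a" using a by (auto simp: b_def)
  have key: "c * (ln b - ln e) \<le> J" if e: "0 < e" "e \<le> b" for e
  proof -
    have sub: "{e..b} \<subseteq> {0<..<a}" using e b by auto
    have I2: "set_integrable lborel {e..b} (\<lambda>u::real. c / u)"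
      by (rule set_integrable_subset[OF I]) (use sub in auto)
    have eqI: "(LINT u:{e..b}|lborel. c / u) = c * ln b - c * ln e"
      unfolding set_lebesgue_integral_def
    proof (rule integral_FTC_atLeastAtMost)
      show "e \<le> b" by (rule e(2))
      show "continuous_on {e..b} (\<lambda>u. c / u)" using e by (intro continuous_intros) auto
      fix u assume u: "e \<le> u" "u \<le> b"
      then have "((\<lambda>u. c * ln u) has_real_derivative c * (1 / u)) (at u within {e..b})"
        using e by (intro derivative_eq_intros) auto
      then show "((\<lambda>u. c * ln u) has_vector_derivative c / u) (at u within {e..b})"
        by (simp add: has_real_derivative_iff_has_vector_derivative)
    qed
    have leJ: "(LINT u:{e..b}|lborel. c / u) \<le> J"
      unfolding J_def set_lebesgue_integral_def
    proof (rule integral_mono)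
      show "integrable lborel (\<lambda>x. indicator {e..b} x *\<^sub>R (c / x))"
        using I2 unfolding set_integrable_def .
      show "integrable lborel (\<lambda>x. indicator {0<..<a} x *\<^sub>R (c / x))"
        using I unfolding set_integrable_def .
      fix u :: real
      show "indicator {e..b} u *\<^sub>R (c / u) \<le> indicator {0<..<a} u *\<^sub>R (c / u)"
        using sub e c by (auto simp: indicator_def)
    qed
    from eqI leJ show ?thesis by (simp add: algebra_simps)
  qed
  define e where "e = b * exp (- (J / c) - 1)"
  have e0: "0 < e" using b by (simp add: e_def)
  have "exp (- (J / c) - 1) \<le> 1"
    using key[of b] b c by (simp add: field_simps)
  then have eb: "e \<le> b" using b unfolding e_def by (simp add: mult_left_le)
  have "ln e = ln b - J / c - 1" using b by (simp add: e_def ln_mult)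
  then have "c * (ln b - ln e) = J + c" using c by (simp add: field_simps)
  with key[OF e0 eb] c show False by simp
qed

lemma dini_cont:
  fixes f :: "real \<Rightarrow> real"
  assumes C: "class_C f" and xq: "x \<in> \<rat>" and x: "0 < x" "x < 1"
  shows "isCont f x"
proof -
  obtain L where L: "(f \<longlongrightarrow> L) (at_left x)" "(f \<longlongrightarrow> L) (at_right x)"
    and "\<exists>\<delta>>0. \<delta> \<le> min x (1 - x) \<and>
           set_integrable lborel {0<..<\<delta>} (\<lambda>u. \<bar>f (x + u) + f (x - u) - 2 * f x\<bar> / u)"
    using C xq x unfolding class_C_def by blast
  then obtain \<delta> where \<delta>: "\<delta> > 0"
    and hint: "set_integrable lborel {0<..<\<delta>} (\<lambda>u. \<bar>f (x + u) + f (x - u) - 2 * f x\<bar> / u)"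
    by blast
  have fxL: "f x = L"
  proof (rule ccontr)
    assume ne: "f x \<noteq> L"
    define c where "c = \<bar>L - f x\<bar>"
    have c: "0 < c" using ne by (simp add: c_def)
    have "eventually (\<lambda>y. dist (f y) L < c / 2) (at_right x)"
      using L(2) c by (intro tendstoD) auto
    then obtain b1 where b1: "b1 > x" "\<And>y. y > x \<Longrightarrow> y < b1 \<Longrightarrow> dist (f y) L < c / 2"
      unfolding eventually_at_right_field by blast
    have "eventually (\<lambda>y. dist (f y) L < c / 2) (at_left x)"
      using L(1) c by (intro tendstoD) auto
    then obtain b2 where b2: "b2 < x" "\<And>y. y > b2 \<Longrightarrow> y < x \<Longrightarrow> dist (f y) L < c / 2"
      unfolding eventually_at_left_field by blast
    define \<eta> where "\<eta> = min \<delta> (min (b1 - x) (x - b2))"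
    have \<eta>: "0 < \<eta>" "\<eta> \<le> \<delta>" using \<delta> b1 b2 by (auto simp: \<eta>_def)
    have hint2: "set_integrable lborel {0<..<\<eta>} (\<lambda>u. \<bar>f (x + u) + f (x - u) - 2 * f x\<bar> / u)"
      by (rule set_integrable_subset[OF hint]) (use \<eta> in auto)
    have "set_integrable lborel {0<..<\<eta>} (\<lambda>u::real. c / u)"
    proof (rule set_integrable_bound[OF hint2])
      show "set_borel_measurable lborel {0<..<\<eta>} (\<lambda>u::real. c / u)"
        unfolding set_borel_measurable_def by measurable
      show "AE u in lborel. u \<in> {0<..<\<eta>} \<longrightarrow> norm (c / u) \<le> norm (\<bar>f (x + u) + f (x - u) - 2 * f x\<bar> / u)"
      proof (intro AE_I2 impI)
        fix u :: real assume u: "u \<in> {0<..<\<eta>}"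
        have d1: "\<bar>f (x + u) - L\<bar> < c / 2"
          using b1(2)[of "x + u"] u by (auto simp: \<eta>_def dist_real_def)
        have d2: "\<bar>f (x - u) - L\<bar> < c / 2"
          using b2(2)[of "x - u"] u by (auto simp: \<eta>_def dist_real_def)
        have "c \<le> \<bar>f (x + u) + f (x - u) - 2 * f x\<bar>"
          using d1 d2 unfolding c_def by (simp add: abs_if split: if_splits) linarith?
        then have "c / u \<le> \<bar>f (x + u) + f (x - u) - 2 * f x\<bar> / u"
          using u by (intro divide_right_mono) auto
        then show "norm (c / u) \<le> norm (\<bar>f (x + u) + f (x - u) - 2 * f x\<bar> / u)"
          using u c by simp
      qed
    qed
    with inv_not_integrable[OF \<eta>(1) c] show False by blast
  qed
  show ?thesis
    unfolding isCont_def using L fxL by (simp add: filterlim_at_split)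
qed


lemma norm_exp_l: "norm (exp (2 * pi * \<i> * of_int l * of_real x)) = 1"
proof -
  have "2 * pi * \<i> * of_int l * of_real x = \<i> * complex_of_real (2 * pi * of_int l * x)"
    by simp
  then show ?thesis by (simp only: norm_exp_i_times)
qed

lemma pointwise_fourier:
  fixes f :: "real \<Rightarrow> real"
  assumes f: "set_integrable lborel {0..1} f" and x: "0 < x" "x < 1" and c: "isCont f x"
    and cs: "(\<lambda>l. norm (fourier_coeff f l)) summable_on UNIV"
  shows "((\<lambda>l. fourier_coeff f l * exp (2 * pi * \<i> * of_int l * of_real x)) has_sum complex_of_real (f x)) UNIV"
proof -
  define g where "g l = fourier_coeff f l * exp (2 * pi * \<i> * of_int l * of_real x)" for l
  have "(\<lambda>l. norm (g l)) summable_on UNIV"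
    using cs by (simp add: g_def norm_mult norm_exp_l)
  then have "g summable_on UNIV" by (rule abs_summable_summable)
  then have hs: "(g has_sum infsum g UNIV) UNIV" by (rule has_sum_infsum)
  have S: "(\<lambda>n. \<Sum>l\<in>{-int n..int n}. g l) \<longlonglongrightarrow> infsum g UNIV"
    by (rule has_sum_symmetric_limit[OF hs])
  have T1: "(\<lambda>N. (\<Sum>n\<le>N. (\<Sum>l\<in>{-int n..int n}. g l)) / of_nat (Suc N)) \<longlonglongrightarrow> infsum g UNIV"
    by (rule cesaro[OF S])
  have T2: "(\<lambda>N. (\<Sum>n\<le>N. (\<Sum>l\<in>{-int n..int n}. g l)) / of_nat (Suc N)) \<longlonglongrightarrow> complex_of_real (f x)"
  proof -
    have "(\<lambda>N. complex_of_real (LINT y:{0..1}|lborel. f y * Fk N (x - y))) \<longlonglongrightarrow> complex_of_real (f x)"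
      by (intro tendsto_of_real fejer[OF f x c])
    moreover have "(\<Sum>n\<le>N. (\<Sum>l\<in>{-int n..int n}. g l)) / of_nat (Suc N) = complex_of_real (LINT y:{0..1}|lborel. f y * Fk N (x - y))" for N
      unfolding g_def by (rule cesaro_Fk[OF f])
    ultimately show ?thesis by simp
  qed
  have "infsum g UNIV = complex_of_real (f x)"
    using T1 T2 by (rule LIMSEQ_unique)
  then have "(g has_sum complex_of_real (f x)) UNIV" using hs by simp
  then show ?thesis unfolding g_def .
qed


lemma omega_eq_1:
  assumes d: "d > 0"
  shows "exp (2 * pi * \<i> * of_int l / of_nat d) = 1 \<longleftrightarrow> int d dvd l"
proof -
  have "exp (2 * pi * \<i> * of_int l / of_nat d) = 1 \<longleftrightarrow> (\<exists>n::int. 2 * pi * of_int l / real d = of_int (2 * n) * pi)"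
  proof -
    have e: "2 * pi * \<i> * of_int l / of_nat d = \<i> * complex_of_real (2 * pi * of_int l / real d)"
      by simp
    show ?thesis unfolding e by (subst exp_eq_1) simp
  qed
  also have "\<dots> \<longleftrightarrow> (\<exists>n::int. of_int l = real d * of_int n)"
  proof -
    have "2 * pi * of_int l / real d = of_int (2 * n) * pi \<longleftrightarrow> of_int l = real d * of_int n" for n :: int
      using d by (auto simp: field_simps)
    then show ?thesis by simp
  qed
  also have "\<dots> \<longleftrightarrow> (\<exists>n::int. l = int d * n)"
    by (metis of_int_eq_iff of_int_mult of_int_of_nat_eq)
  also have "\<dots> \<longleftrightarrow> int d dvd l" by (auto simp: dvd_def)
  finally show ?thesis .
qed

lemma roots_sum:
  assumes d: "d > 0"
  shows "(\<Sum>k=1..d. exp (2 * pi * \<i> * of_int l * of_real (real k / real d))) = (if int d dvd l then of_nat d else 0)"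
proof -
  define w where "w = exp (2 * pi * \<i> * of_int l / of_nat d)"
  have pw: "exp (2 * pi * \<i> * of_int l * of_real (real k / real d)) = w ^ k" for k
  proof -
    have "2 * pi * \<i> * of_int l * of_real (real k / real d) = of_nat k * (2 * pi * \<i> * of_int l / of_nat d)"
      by simp
    then show ?thesis unfolding w_def by (simp only: exp_of_nat_mult)
  qed
  have wd: "w ^ d = 1"
  proof -
    have "w ^ d = exp (of_nat d * (2 * pi * \<i> * of_int l / of_nat d))"
      unfolding w_def by (simp only: exp_of_nat_mult)
    also have "of_nat d * (2 * pi * \<i> * of_int l / of_nat d) = 2 * pi * \<i> * of_int l"
      using d by simp
    also have "exp (2 * pi * \<i> * of_int l) = 1"
      by (subst exp_eq_1) auto
    finally show ?thesis .
  qed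
  have "(\<Sum>k=1..d. exp (2 * pi * \<i> * of_int l * of_real (real k / real d))) = (\<Sum>k=1..d. w ^ k)"
    by (simp only: pw)
  also have "\<dots> = (\<Sum>i<d. w ^ Suc i)"
    using sum.atLeast1_atMost_eq[of "\<lambda>k. w ^ k" d] by simp
  also have "\<dots> = w * (\<Sum>i<d. w ^ i)"
    by (simp add: sum_distrib_left)
  also have "\<dots> = (if int d dvd l then of_nat d else 0)"
  proof (cases "int d dvd l")
    case True
    then have "w = 1" unfolding w_def using omega_eq_1[OF d] by simp
    then show ?thesis using True by simp
  next
    case False
    then have "w \<noteq> 1" unfolding w_def using omega_eq_1[OF d] by simp
    then show ?thesis using False wd by (simp add: geometric_sum)
  qed
  finally show ?thesis .
qed

lemma has_sum_sum_fun:
  fixes g :: "'k \<Rightarrow> 'a \<Rightarrow> 'b::topological_comm_monoid_add"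
  assumes "finite K" "\<And>k. k \<in> K \<Longrightarrow> (g k has_sum s k) A"
  shows "((\<lambda>x. \<Sum>k\<in>K. g k x) has_sum (\<Sum>k\<in>K. s k)) A"
  using assms
proof (induction K rule: finite_induct)
  case empty then show ?case by simp
next
  case (insert k K)
  then show ?case by (simp add: has_sum_add)
qed


lemma fourier_coeff_0: "fourier_coeff f 0 = complex_of_real (LINT x:{0..1}|lborel. f x)"
  unfolding fourier_coeff_def by (simp add: set_integral_complex_of_real)

lemma term_identity:
  fixes f :: "real \<Rightarrow> real"
  assumes f: "set_integrable lborel {0..1} f" and C: "class_C f"
    and cs: "(\<lambda>l. norm (fourier_coeff f l)) summable_on UNIV"
    and d: "d > 0"
  shows "complex_of_real (D_tilde f d - f 1) + infsum (fourier_coeff f) UNIV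
       = of_nat d * infsum (fourier_coeff f) {l. l \<noteq> 0 \<and> int d dvd l}"
proof -
  define c where "c = fourier_coeff f"
  define T where "T = infsum c UNIV"
  have csum: "c summable_on UNIV" using cs unfolding c_def by (rule abs_summable_summable)
  define E where "E k = (if k = d then T else complex_of_real (f (real k / real d)))" for k :: nat
  have hk: "((\<lambda>l. c l * exp (2 * pi * \<i> * of_int l * of_real (real k / real d))) has_sum E k) UNIV"
    if k: "k \<in> {1..d}" for k
  proof (cases "k = d")
    case True
    have "exp (2 * pi * \<i> * of_int l * of_real (real k / real d)) = 1" for l
      using True d by (subst exp_eq_1) auto
    then show ?thesis using True csum by (simp add: E_def T_def)
  next
    case False
    then have x: "0 < real k / real d" "real k / real d < 1" using k by auto
    have q: "real k / real d \<in> \<rat>" by simp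
    have "isCont f (real k / real d)" by (rule dini_cont[OF C q x])
    from pointwise_fourier[OF f x this cs] show ?thesis
      using False by (simp add: E_def c_def)
  qed
  have hsum: "((\<lambda>l. \<Sum>k\<in>{1..d}. c l * exp (2 * pi * \<i> * of_int l * of_real (real k / real d))) has_sum (\<Sum>k\<in>{1..d}. E k)) UNIV"
    by (rule has_sum_sum_fun) (simp, erule hk)
  have "(\<lambda>l. \<Sum>k\<in>{1..d}. c l * exp (2 * pi * \<i> * of_int l * of_real (real k / real d)))
      = (\<lambda>l. of_nat d * (if int d dvd l then c l else 0))"
  proof
    fix l
    have "(\<Sum>k\<in>{1..d}. c l * exp (2 * pi * \<i> * of_int l * of_real (real k / real d)))
       = c l * (\<Sum>k\<in>{1..d}. exp (2 * pi * \<i> * of_int l * of_real (real k / real d)))"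
      by (rule sum_distrib_left[symmetric])
    also have "\<dots> = c l * (if int d dvd l then of_nat d else 0)"
      by (simp only: roots_sum[OF d])
    finally show "(\<Sum>k\<in>{1..d}. c l * exp (2 * pi * \<i> * of_int l * of_real (real k / real d)))
       = of_nat d * (if int d dvd l then c l else 0)" by simp
  qed
  with hsum have h2: "((\<lambda>l. of_nat d * (if int d dvd l then c l else 0)) has_sum (\<Sum>k\<in>{1..d}. E k)) UNIV"
    by simp
  have sub: "c summable_on {l. int d dvd l}"
    using csum by (rule summable_on_subset_banach) auto
  have h3: "((\<lambda>l. if int d dvd l then c l else 0) has_sum infsum c {l. int d dvd l}) UNIV"
  proof -
    have "(c has_sum infsum c {l. int d dvd l}) {l. int d dvd l}" using sub by (rule has_sum_infsum)
    then show ?thesis by (subst has_sum_cong_neutral[where T="{l. int d dvd l}" and g=c]) auto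
  qed
  from has_sum_cmult_right[OF h3, of "of_nat d"] h2
  have eq1: "(\<Sum>k\<in>{1..d}. E k) = of_nat d * infsum c {l. int d dvd l}"
    by (rule has_sum_unique[rotated])
  have "{l. int d dvd l} = insert 0 {l. l \<noteq> 0 \<and> int d dvd l}" by auto
  then have eq2: "infsum c {l. int d dvd l} = c 0 + infsum c {l. l \<noteq> 0 \<and> int d dvd l}"
    using summable_on_subset_banach[OF csum] by (simp add: infsum_insert)
  have eq3: "(\<Sum>k\<in>{1..d}. E k) = complex_of_real (D_sum f d - f 1) + T"
  proof -
    obtain d' where d': "d = Suc d'" using d by (cases d) auto
    have "(\<Sum>k\<in>{1..d}. E k) = (\<Sum>k\<in>{1..d'}. E k) + E d"
      unfolding d' by (simp add: sum.cl_ivl_Suc)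
    also have "(\<Sum>k\<in>{1..d'}. E k) = (\<Sum>k\<in>{1..d'}. complex_of_real (f (real k / real d)))"
      by (intro sum.cong) (auto simp: E_def d')
    also have "E d = T" by (simp add: E_def)
    also have "D_sum f d = (\<Sum>k\<in>{1..d'}. f (real k / real d)) + f 1"
      unfolding D_sum_def d' by (simp add: sum.cl_ivl_Suc)
    ultimately show ?thesis by simp
  qed
  have "complex_of_real (D_tilde f d - f 1) + T = complex_of_real (D_sum f d - f 1) + T - of_nat d * c 0"
    by (simp add: D_tilde_def c_def fourier_coeff_0)
  also have "\<dots> = of_nat d * infsum c {l. l \<noteq> 0 \<and> int d dvd l}"
    using eq1 eq2 eq3 by (simp add: algebra_simps)
  finally show ?thesis by (simp add: c_def T_def)
qed


lemma divisors_card: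
  assumes l: "l \<noteq> (0::int)"
  shows "finite {d'::nat. int (Suc d') dvd l}" "card {d'::nat. int (Suc d') dvd l} = num_divisors l"
proof -
  have sub: "{d'::nat. int (Suc d') dvd l} \<subseteq> {..nat \<bar>l\<bar>}"
  proof
    fix d' assume "d' \<in> {d'::nat. int (Suc d') dvd l}"
    then have "int (Suc d') dvd \<bar>l\<bar>" by simp
    then have "int (Suc d') \<le> \<bar>l\<bar>" using l by (intro zdvd_imp_le) auto
    then show "d' \<in> {..nat \<bar>l\<bar>}" by auto
  qed
  show fin: "finite {d'::nat. int (Suc d') dvd l}" by (rule finite_subset[OF sub]) auto
  have inj: "inj_on (\<lambda>d'. int (Suc d')) {d'::nat. int (Suc d') dvd l}" by (auto simp: inj_on_def)
  have img: "(\<lambda>d'. int (Suc d')) ` {d'::nat. int (Suc d') dvd l} = {m::int. 0 < m \<and> m dvd \<bar>l\<bar>}"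
  proof (intro equalityI subsetI)
    fix m assume "m \<in> {m::int. 0 < m \<and> m dvd \<bar>l\<bar>}"
    then have m: "0 < m" "m dvd l" by auto
    then have "m = int (Suc (nat (m - 1)))" by simp
    then show "m \<in> (\<lambda>d'. int (Suc d')) ` {d'::nat. int (Suc d') dvd l}"
      using m by (metis (mono_tags, lifting) image_eqI mem_Collect_eq)
  qed auto
  show "card {d'::nat. int (Suc d') dvd l} = num_divisors l"
    unfolding num_divisors_def using card_image[OF inj] img by simp
qed

lemma num_divisors_ge1: "l \<noteq> 0 \<Longrightarrow> num_divisors l \<ge> 1"
proof -
  assume l: "l \<noteq> 0"
  have "0 \<in> {d'::nat. int (Suc d') dvd l}" by simp
  then have "card {d'::nat. int (Suc d') dvd l} \<noteq> 0" using divisors_card(1)[OF l]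
    by (metis card_0_eq empty_iff)
  then show ?thesis using divisors_card(2)[OF l] by simp
qed

lemma fubini_divisors:
  fixes a :: "int \<Rightarrow> real"
  assumes a0: "\<And>l. a l \<ge> 0"
    and hA: "((\<lambda>l. a l * real (num_divisors l)) has_sum A) (UNIV - {0})"
    and as: "a summable_on UNIV"
  shows "((\<lambda>d'. infsum a {l. l \<noteq> 0 \<and> int (Suc d') dvd l}) has_sum A) UNIV"
proof -
  define P where "P = Sigma (UNIV - {0}) (\<lambda>l. {d'::nat. int (Suc d') dvd l})"
  define g where "g = (\<lambda>(l::int, d'::nat). a l)"
  have inner: "((\<lambda>d'. g (l, d')) has_sum a l * real (num_divisors l)) {d'::nat. int (Suc d') dvd l}"
    if l: "l \<in> UNIV - {0}" for l
  proof -
    have l0: "l \<noteq> 0" using l by simp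
    have "((\<lambda>d'. a l) has_sum (\<Sum>d'\<in>{d'::nat. int (Suc d') dvd l}. a l)) {d'::nat. int (Suc d') dvd l}"
      by (rule has_sum_finiteI[OF divisors_card(1)[OF l0]]) simp
    then show ?thesis using divisors_card(2)[OF l0] by (simp add: g_def mult.commute)
  qed
  have gs: "g summable_on P"
    unfolding P_def
    by (rule summable_on_SigmaI[OF inner]) (use hA in \<open>auto simp: has_sum_iff g_def a0\<close>)
  have gP: "(g has_sum A) P"
    unfolding P_def by (rule has_sum_SigmaI[OF inner hA gs[unfolded P_def]])
  define P' where "P' = Sigma UNIV (\<lambda>d'::nat. {l::int. l \<noteq> 0 \<and> int (Suc d') dvd l})"
  have PP: "P = prod.swap ` P'" unfolding P_def P'_def by force
  have "((g \<circ> prod.swap) has_sum A) P'"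
    using gP unfolding PP by (subst (asm) has_sum_reindex) (auto simp: inj_on_def)
  then have gP': "((\<lambda>(d', l). a l) has_sum A) P'"
    by (simp add: g_def comp_def split_beta')
  show ?thesis
  proof (rule has_sum_Sigma'[OF gP'[unfolded P'_def]])
    fix d' :: nat
    have "a summable_on {l. l \<noteq> 0 \<and> int (Suc d') dvd l}"
      using as by (rule summable_on_subset_banach) auto
    then show "((\<lambda>y. (\<lambda>(d', l). a l) (d', y)) has_sum infsum a {l. l \<noteq> 0 \<and> int (Suc d') dvd l}) {l. l \<noteq> 0 \<and> int (Suc d') dvd l}"
      by (simp add: has_sum_infsum)
  qed
qed


theorem corollary3p2:
  fixes f :: "real \<Rightarrow> real" and A :: real
  assumes "set_integrable lborel {0..1} f"
    and "class_C f"
    and "(\<lambda>l. norm (fourier_coeff f l) * real (num_divisors l)) summable_on (UNIV - {0})"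
    and "A = (\<Sum>\<^sub>\<infinity>l\<in>UNIV - {0}. norm (fourier_coeff f l) * real (num_divisors l))"
  shows "summable (\<lambda>d. (1 / real (Suc d)) *
            norm (complex_of_real (D_tilde f (Suc d) - f 1) + (\<Sum>\<^sub>\<infinity>l\<in>UNIV. fourier_coeff f l))) \<and>
         (\<Sum>d. (1 / real (Suc d)) *
            norm (complex_of_real (D_tilde f (Suc d) - f 1) + (\<Sum>\<^sub>\<infinity>l\<in>UNIV. fourier_coeff f l))) \<le> A"
proof -
  note f = assms(1) and C = assms(2) and hs = assms(3)
  define a where "a l = norm (fourier_coeff f l)" for l
  have hA: "((\<lambda>l. a l * real (num_divisors l)) has_sum A) (UNIV - {0})"
    using hs assms(4) unfolding a_def by (simp add: has_sum_infsum)
  have as0: "a summable_on (UNIV - {0})"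
  proof (rule summable_on_comparison_test[OF hs])
    fix l :: int assume "l \<in> UNIV - {0}"
    then have "1 \<le> real (num_divisors l)" using num_divisors_ge1[of l] by simp
    then show "a l \<le> norm (fourier_coeff f l) * real (num_divisors l)"
      unfolding a_def by (metis mult_left_mono mult.right_neutral norm_ge_zero)
  qed (simp add: a_def)
  have as: "a summable_on UNIV"
  proof -
    have "UNIV = insert 0 (UNIV - {0::int})" by auto
    then show ?thesis using as0 by (metis summable_on_insert_iff)
  qed
  have cs: "(\<lambda>l. norm (fourier_coeff f l)) summable_on UNIV" using as unfolding a_def .
  define b where "b d' = infsum a {l. l \<noteq> 0 \<and> int (Suc d') dvd l}" for d'
  have bA: "(b has_sum A) UNIV"
    unfolding b_def by (rule fubini_divisors[OF _ hA as]) (simp add: a_def)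
  then have bsums: "b sums A" by (rule has_sum_imp_sums)
  define t where "t d = (1 / real (Suc d)) *
            norm (complex_of_real (D_tilde f (Suc d) - f 1) + (\<Sum>\<^sub>\<infinity>l\<in>UNIV. fourier_coeff f l))" for d
  have tb: "t d \<le> b d" for d
  proof -
    have "t d = (1 / real (Suc d)) * norm (of_nat (Suc d) * infsum (fourier_coeff f) {l. l \<noteq> 0 \<and> int (Suc d) dvd l})"
      unfolding t_def by (subst term_identity[OF f C cs]) auto
    also have "\<dots> = norm (infsum (fourier_coeff f) {l. l \<noteq> 0 \<and> int (Suc d) dvd l})"
      by (simp add: norm_mult del: of_nat_Suc)
    also have "\<dots> \<le> infsum (\<lambda>l. norm (fourier_coeff f l)) {l. l \<noteq> 0 \<and> int (Suc d) dvd l}"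
    proof (rule norm_infsum_bound)
      show "(\<lambda>l. norm (fourier_coeff f l)) summable_on {l. l \<noteq> 0 \<and> int (Suc d) dvd l}"
        using cs by (rule summable_on_subset_banach) auto
    qed
    also have "\<dots> = b d" by (simp add: b_def a_def[abs_def])
    finally show ?thesis .
  qed
  have t0: "t d \<ge> 0" for d by (simp add: t_def)
  have st: "summable t"
    by (rule summable_comparison_test'[of b 0]) (use bsums tb t0 in \<open>auto simp: sums_iff\<close>)
  have "suminf t \<le> suminf b" using tb st bsums by (intro suminf_le) (auto simp: sums_iff)
  also have "suminf b = A" using bsums by (simp add: sums_iff)
  finally show ?thesis using st unfolding t_def by simp
qed

end
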